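(* Let $\mathcal{G}=(V,E)$ be a connected hypergraph with $n$ vertices and minimum edge cardinality $3$ (i.e. $\min_{e\in E}|e|=3$). Let $\lambda_{\max}$ be the largest eigenvalue of $A_{\mathcal{G}}$, with unit eigenvector $X_1=((X_1)_1,\dots,(X_1)_n)^t$ having positive entries, let $\alpha=\min_i (X_1)_i$, and let $\theta$ be the second largest eigenvalue of $A_{\mathcal{G}}$ in absolute value (i.e., if $\lambda_1=\lambda_{\max}\ge\lambda_2\ge\dots\ge\lambda_n$ are the eigenvalues, $\theta=\max_{l\ge 2}|\lambda_l|$). Then $$\operatorname{diam}(\mathcal{G})\le\left\lfloor 1+\frac{\log\big((1-\alpha^2)/\alpha^2\big)}{\log(\lambda_{\max}/\theta)}\right\rfloor.$$
   Context: A hypergraph $\mathcal{G}=(V,E)$ has a finite vertex set $V$ and a set $E$ of subsets of $V$ (edges), each of cardinality at least $2$. Two distinct vertices $i,j$ are adjacent if some edge contains both. The adjacency matrix $A_{\mathcal{G}}$ has $(A_{\mathcal{G}})_{ij}=\sum_{e\in E,\, i,j\in e}\frac{1}{|e|-1}$ for $i\ne j$ and zero diagonal. A path of length $l$ between $v_0$ and $v_l$ is an alternating sequence $v_0e_1v_1e_2\dots e_lv_l$ of distinct vertices and distinct edges with $v_{i-1},v_i\in e_i$; the distance $d(i,j)$ is the minimum length of an $i$–$j$ path, and $\operatorname{diam}(\mathcal{G})=\max_{i,j\in V}d(i,j)$. $\mathcal{G}$ is connected if any two vertices are joined by a path. *)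

theory Defs
  imports "Jordan_Normal_Form.Char_Poly"
begin

definition hypergraph :: "nat \<Rightarrow> nat set set \<Rightarrow> bool" where
  "hypergraph n E \<longleftrightarrow> (\<forall>e\<in>E. e \<subseteq> {0..<n} \<and> card e \<ge> 2)"

definition hg_adj :: "nat \<Rightarrow> nat set set \<Rightarrow> real mat" where
  "hg_adj n E = mat n n (\<lambda>(i,j). if i = j then 0
      else (\<Sum>e\<in>{e\<in>E. i \<in> e \<and> j \<in> e}. 1 / (real (card e) - 1)))"

definition hg_path :: "nat set set \<Rightarrow> nat list \<Rightarrow> nat set list \<Rightarrow> bool" where
  "hg_path E vs es \<longleftrightarrow> length vs = length es + 1 \<and> distinct vs \<and> distinct es
     \<and> set es \<subseteq> E \<and> (\<forall>k<length es. vs ! k \<in> es ! k \<and> vs ! (k+1) \<in> es ! k)"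

definition hg_path_between :: "nat set set \<Rightarrow> nat \<Rightarrow> nat \<Rightarrow> nat \<Rightarrow> bool" where
  "hg_path_between E i j l \<longleftrightarrow> (\<exists>vs es. hg_path E vs es \<and> hd vs = i \<and> last vs = j \<and> length es = l)"

definition hg_connected :: "nat \<Rightarrow> nat set set \<Rightarrow> bool" where
  "hg_connected n E \<longleftrightarrow> (\<forall>i<n. \<forall>j<n. \<exists>l. hg_path_between E i j l)"

definition hg_dist :: "nat set set \<Rightarrow> nat \<Rightarrow> nat \<Rightarrow> nat" where
  "hg_dist E i j = (LEAST l. hg_path_between E i j l)"

definition hg_diam :: "nat \<Rightarrow> nat set set \<Rightarrow> nat" where
  "hg_diam n E = Max {hg_dist E i j | i j. i < n \<and> j < n}"

end

theory Submission
  imports Defs "Jordan_Normal_Form.Schur_Decomposition"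
begin


definition mvA :: "real mat \<Rightarrow> nat \<Rightarrow> (nat \<Rightarrow> real) \<Rightarrow> nat \<Rightarrow> real" where
  "mvA A n v = (\<lambda>i. \<Sum>j<n. A $$ (i,j) * v j)"

definition mvp :: "real mat \<Rightarrow> nat \<Rightarrow> nat \<Rightarrow> (nat \<Rightarrow> real) \<Rightarrow> nat \<Rightarrow> real" where
  "mvp A n k = (mvA A n ^^ k)"

definition ip :: "nat \<Rightarrow> (nat \<Rightarrow> real) \<Rightarrow> (nat \<Rightarrow> real) \<Rightarrow> real" where
  "ip n u v = (\<Sum>i<n. u i * v i)"

lemma mvp_0[simp]: "mvp A n 0 v = v" by (simp add: mvp_def)
lemma mvp_Suc: "mvp A n (Suc k) v = mvA A n (mvp A n k v)" by (simp add: mvp_def)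
lemma mvp_Suc': "mvp A n (Suc k) v = mvp A n k (mvA A n v)"
  by (simp add: mvp_def funpow_Suc_right del: funpow.simps)
lemma mvp_add: "mvp A n (a + b) v = mvp A n a (mvp A n b v)"
  by (simp add: mvp_def funpow_add)

lemma mvA_lin: "mvA A n (\<lambda>x. a * u x + b * v x) = (\<lambda>x. a * mvA A n u x + b * mvA A n v x)"
  by (auto simp: mvA_def sum_distrib_left sum.distrib algebra_simps intro!: ext sum.cong)

lemma mvp_lin: "mvp A n k (\<lambda>x. a * u x + b * v x) = (\<lambda>x. a * mvp A n k u x + b * mvp A n k v x)"
  by (induction k) (simp_all add: mvp_Suc mvA_lin)

lemma mvp_scale: "mvp A n k (\<lambda>x. a * u x) = (\<lambda>x. a * mvp A n k u x)"
  using mvp_lin[of A n k a u 0 u] by simp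

lemma mvA_cong: "(\<And>j. j < n \<Longrightarrow> u j = v j) \<Longrightarrow> mvA A n u = mvA A n v"
  by (auto simp: mvA_def intro!: ext sum.cong)

lemma mvp_cong: "(\<And>j. j < n \<Longrightarrow> u j = v j) \<Longrightarrow> i < n \<Longrightarrow> mvp A n k u i = mvp A n k v i"
proof (induction k arbitrary: i)
  case 0 then show ?case by simp
next
  case (Suc k)
  have "mvA A n (mvp A n k u) = mvA A n (mvp A n k v)"
    by (rule mvA_cong) (use Suc in auto)
  then show ?case by (simp add: mvp_Suc)
qed

lemma ip_sym: "ip n u v = ip n v u" by (simp add: ip_def mult.commute)

lemma ip_cong: "(\<And>j. j < n \<Longrightarrow> u j = u' j) \<Longrightarrow> (\<And>j. j < n \<Longrightarrow> v j = v' j) \<Longrightarrow> ip n u v = ip n u' v'"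
  by (simp add: ip_def)

lemma ip_lin: "ip n w (\<lambda>x. a * u x + b * v x) = a * ip n w u + b * ip n w v"
  by (simp add: ip_def sum_distrib_left sum.distrib algebra_simps)

lemma ip_self_nonneg: "ip n u u \<ge> 0"
  by (simp add: ip_def sum_nonneg)

lemma ip_self_zero: "ip n u u = 0 \<Longrightarrow> j < n \<Longrightarrow> u j = 0"
  unfolding ip_def by (subst (asm) sum_nonneg_eq_0_iff) auto

lemma cauchy_schwarz: "(ip n u v)\<^sup>2 \<le> ip n u u * ip n v v"
proof (cases "ip n v v = 0")
  case True
  then have "ip n u v = 0" unfolding ip_def
    using ip_self_zero[OF True] by (simp add: ip_def)
  then show ?thesis using True by simp
next
  case False
  then have pos: "ip n v v > 0" using ip_self_nonneg[of n v] by linarith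
  define t where "t = ip n u v / ip n v v"
  have "0 \<le> ip n (\<lambda>x. u x - t * v x) (\<lambda>x. u x - t * v x)" by (rule ip_self_nonneg)
  also have "\<dots> = ip n u u - 2 * t * ip n u v + t\<^sup>2 * ip n v v"
    by (simp add: ip_def algebra_simps sum.distrib sum_subtractf sum_distrib_left power2_eq_square)
  also have "\<dots> = ip n u u - (ip n u v)\<^sup>2 / ip n v v"
    using pos by (simp add: t_def power2_eq_square field_simps)
  finally show ?thesis using pos by (simp add: field_simps)
qed

locale symmat =
  fixes n :: nat and A :: "real mat"
  assumes carr: "A \<in> carrier_mat n n"
    and symm: "\<And>i j. i < n \<Longrightarrow> j < n \<Longrightarrow> A $$ (i,j) = A $$ (j,i)"
begin

lemma ip_mvA: "ip n u (mvA A n v) = ip n (mvA A n u) v"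
proof -
  have "ip n u (mvA A n v) = (\<Sum>i<n. \<Sum>j<n. u i * A $$ (i,j) * v j)"
    by (simp add: ip_def mvA_def sum_distrib_left mult.assoc)
  also have "\<dots> = (\<Sum>j<n. \<Sum>i<n. u i * A $$ (i,j) * v j)" by (rule sum.swap)
  also have "\<dots> = (\<Sum>j<n. \<Sum>i<n. A $$ (j,i) * u i * v j)"
    by (intro sum.cong refl) (simp add: symm)
  also have "\<dots> = ip n (mvA A n u) v"
    by (simp add: ip_def mvA_def sum_distrib_right)
  finally show ?thesis .
qed

lemma ip_mvp: "ip n u (mvp A n k v) = ip n (mvp A n k u) v"
proof (induction k arbitrary: u)
  case 0 then show ?case by simp
next
  case (Suc k)
  have "ip n u (mvp A n (Suc k) v) = ip n (mvA A n u) (mvp A n k v)"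
    by (simp add: mvp_Suc ip_mvA)
  also have "\<dots> = ip n (mvp A n k (mvA A n u)) v" by (rule Suc)
  finally show ?case by (simp add: mvp_Suc')
qed

lemma dimA: "dim_row A = n" "dim_col A = n" using carr by auto

lemma mvp_entry: "i < n \<Longrightarrow> mvp A n k v i = (\<Sum>j<n. (A ^\<^sub>m k) $$ (i,j) * v j)"
proof (induction k arbitrary: v)
  case 0
  have "(\<Sum>j<n. (A ^\<^sub>m 0) $$ (i,j) * v j) = (\<Sum>j<n. (if i = j then v j else 0))"
    using 0 dimA by (intro sum.cong) auto
  also have "\<dots> = v i" using 0 by simp
  finally show ?case by simp
next
  case (Suc k)
  have pc: "A ^\<^sub>m k \<in> carrier_mat n n" using pow_carrier_mat[OF carr] .
  have "mvp A n (Suc k) v i = (\<Sum>j<n. (A ^\<^sub>m k) $$ (i,j) * (\<Sum>c<n. A $$ (j,c) * v c))"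
    using Suc by (simp add: mvp_Suc' mvA_def)
  also have "\<dots> = (\<Sum>j<n. \<Sum>c<n. (A ^\<^sub>m k) $$ (i,j) * A $$ (j,c) * v c)"
    by (simp add: sum_distrib_left mult.assoc)
  also have "\<dots> = (\<Sum>c<n. \<Sum>j<n. (A ^\<^sub>m k) $$ (i,j) * A $$ (j,c) * v c)" by (rule sum.swap)
  also have "\<dots> = (\<Sum>c<n. (A ^\<^sub>m Suc k) $$ (i,c) * v c)"
  proof (intro sum.cong refl)
    fix c assume c: "c \<in> {..<n}"
    have "(A ^\<^sub>m Suc k) $$ (i,c) = (\<Sum>j<n. (A ^\<^sub>m k) $$ (i,j) * A $$ (j,c))"
      using Suc.prems c pc carr
      by (auto simp: index_mult_mat scalar_prod_def row_def col_def lessThan_atLeast0 intro!: sum.cong)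
    then show "(\<Sum>j<n. (A ^\<^sub>m k) $$ (i,j) * A $$ (j,c) * v c) = (A ^\<^sub>m Suc k) $$ (i,c) * v c"
      by (simp add: sum_distrib_right)
  qed
  finally show ?case .
qed

end


lemma ut_pow:
  assumes T: "T \<in> carrier_mat n n" and ut: "upper_triangular (T :: real mat)"
  shows "upper_triangular (T ^\<^sub>m k) \<and> (\<forall>a<n. (T ^\<^sub>m k) $$ (a,a) = T $$ (a,a) ^ k)"
proof (induction k)
  case 0
  then show ?case using T by auto
next
  case (Suc k)
  have pc: "T ^\<^sub>m k \<in> carrier_mat n n" using pow_carrier_mat[OF T] .
  have ent: "(T ^\<^sub>m Suc k) $$ (i,j) = (\<Sum>c<n. (T ^\<^sub>m k) $$ (i,c) * T $$ (c,j))"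
    if "i < n" "j < n" for i j
    using that pc T
    by (auto simp: scalar_prod_def row_def col_def lessThan_atLeast0 intro!: sum.cong)
  have ut2: "upper_triangular (T ^\<^sub>m Suc k)"
  proof (rule upper_triangularI)
    fix i j assume ji: "j < i" and i: "i < dim_row (T ^\<^sub>m Suc k)"
    then have i': "i < n" using pc T by auto
    have "(\<Sum>c<n. (T ^\<^sub>m k) $$ (i,c) * T $$ (c,j)) = 0"
    proof (intro sum.neutral ballI)
      fix c assume c: "c \<in> {..<n}"
      show "(T ^\<^sub>m k) $$ (i,c) * T $$ (c,j) = 0"
      proof (cases "c < i")
        case True
        then have "(T ^\<^sub>m k) $$ (i,c) = 0"
          using upper_triangularD[of "T ^\<^sub>m k" c i] Suc.IH i' pc by auto
        then show ?thesis by simp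
      next
        case False
        then have "T $$ (c,j) = 0" using upper_triangularD[OF ut, of j c] ji c T by auto
        then show ?thesis by simp
      qed
    qed
    then show "(T ^\<^sub>m Suc k) $$ (i,j) = 0" using ent[OF i'] ji i' by auto
  qed
  have "(T ^\<^sub>m Suc k) $$ (a,a) = T $$ (a,a) ^ Suc k" if a: "a < n" for a
  proof -
    have "(\<Sum>c<n. (T ^\<^sub>m k) $$ (a,c) * T $$ (c,a)) = (T ^\<^sub>m k) $$ (a,a) * T $$ (a,a)"
    proof -
      have "(\<Sum>c\<in>{..<n} - {a}. (T ^\<^sub>m k) $$ (a,c) * T $$ (c,a)) = 0"
      proof (intro sum.neutral ballI)
        fix c assume c: "c \<in> {..<n} - {a}"
        show "(T ^\<^sub>m k) $$ (a,c) * T $$ (c,a) = 0"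
        proof (cases "c < a")
          case True
          then have "(T ^\<^sub>m k) $$ (a,c) = 0"
            using upper_triangularD[of "T ^\<^sub>m k" c a] Suc.IH a pc by auto
          then show ?thesis by simp
        next
          case False
          then have "a < c" using c by auto
          then have "T $$ (c,a) = 0" using upper_triangularD[OF ut, of a c] c T by auto
          then show ?thesis by simp
        qed
      qed
      then show ?thesis using sum.remove[of "{..<n}" a "\<lambda>c. (T ^\<^sub>m k) $$ (a,c) * T $$ (c,a)"] a by simp
    qed
    then show ?thesis using ent[OF a a] Suc.IH a by (simp add: mult.commute)
  qed
  then show ?case using ut2 by blast
qed

lemma mult_entry:
  assumes "A \<in> carrier_mat n n" "B \<in> carrier_mat n n" "i < n" "j < n"
  shows "(A * B) $$ (i,j) = (\<Sum>c<n. A $$ (i,c) * B $$ (c,j))"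
  using assms by (auto simp: scalar_prod_def row_def col_def lessThan_atLeast0 intro!: sum.cong)

lemma trace_sim:
  assumes P: "P \<in> carrier_mat n n" and B: "B \<in> carrier_mat n n" and Q: "Q \<in> carrier_mat n n"
    and QP: "Q * P = 1\<^sub>m n"
  shows "(\<Sum>i<n. (P * B * Q) $$ (i,i)) = (\<Sum>a<n. (B :: real mat) $$ (a,a))"
proof -
  have "(\<Sum>i<n. (P * B * Q) $$ (i,i)) = (\<Sum>i<n. \<Sum>b<n. (\<Sum>a<n. P $$ (i,a) * B $$ (a,b)) * Q $$ (b,i))"
  proof (intro sum.cong refl)
    fix i assume i: "i \<in> {..<n}"
    have "(P * B * Q) $$ (i,i) = (\<Sum>b<n. (P * B) $$ (i,b) * Q $$ (b,i))"
      using mult_entry[OF mult_carrier_mat[OF P B] Q, of i i] i by simp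
    also have "\<dots> = (\<Sum>b<n. (\<Sum>a<n. P $$ (i,a) * B $$ (a,b)) * Q $$ (b,i))"
      using mult_entry[OF P B, of i] i by simp
    finally show "(P * B * Q) $$ (i,i) = (\<Sum>b<n. (\<Sum>a<n. P $$ (i,a) * B $$ (a,b)) * Q $$ (b,i))" .
  qed
  also have "\<dots> = (\<Sum>i<n. \<Sum>b<n. \<Sum>a<n. B $$ (a,b) * (Q $$ (b,i) * P $$ (i,a)))"
    by (intro sum.cong refl) (simp add: sum_distrib_right sum_distrib_left mult_ac)
  also have "\<dots> = (\<Sum>b<n. \<Sum>i<n. \<Sum>a<n. B $$ (a,b) * (Q $$ (b,i) * P $$ (i,a)))"
    by (rule sum.swap)
  also have "\<dots> = (\<Sum>b<n. \<Sum>a<n. \<Sum>i<n. B $$ (a,b) * (Q $$ (b,i) * P $$ (i,a)))"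
    by (intro sum.cong refl sum.swap)
  also have "\<dots> = (\<Sum>b<n. \<Sum>a<n. B $$ (a,b) * (Q * P) $$ (b,a))"
  proof (intro sum.cong refl)
    fix b a assume "b \<in> {..<n}" "a \<in> {..<n}"
    then show "(\<Sum>i<n. B $$ (a,b) * (Q $$ (b,i) * P $$ (i,a))) = B $$ (a,b) * (Q * P) $$ (b,a)"
      using mult_entry[OF Q P, of b a] by (simp add: sum_distrib_left)
  qed
  also have "\<dots> = (\<Sum>b<n. \<Sum>a<n. if a = b then B $$ (a,b) else 0)"
    unfolding QP by (intro sum.cong refl) auto
  also have "\<dots> = (\<Sum>a<n. B $$ (a,a))" by simp
  finally show ?thesis .
qed

context symmat
begin

lemma trace_pow:
  assumes cp: "char_poly A = (\<Prod>a\<leftarrow>ls. [:- a, 1:])"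
  shows "(\<Sum>i<n. (A ^\<^sub>m m) $$ (i,i)) = sum_list (map (\<lambda>x. x ^ m) ls)"
proof -
  obtain B P Q where sd: "schur_decomposition A ls = (B,P,Q)" by (cases "schur_decomposition A ls") auto
  from schur_decomposition[OF carr cp sd]
  have wit: "similar_mat_wit A B P Q" and ut: "upper_triangular B" and dg: "diag_mat B = ls" by auto
  from wit have cs: "B \<in> carrier_mat n n" "P \<in> carrier_mat n n" "Q \<in> carrier_mat n n" "Q * P = 1\<^sub>m n"
    using carr unfolding similar_mat_wit_def Let_def by auto
  have "A ^\<^sub>m m = P * B ^\<^sub>m m * Q" using similar_mat_wit_pow_id[OF wit] .
  then have "(\<Sum>i<n. (A ^\<^sub>m m) $$ (i,i)) = (\<Sum>a<n. (B ^\<^sub>m m) $$ (a,a))"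
    using trace_sim[OF cs(2) pow_carrier_mat[OF cs(1)] cs(3) cs(4)] by simp
  also have "\<dots> = (\<Sum>a<n. B $$ (a,a) ^ m)"
    using ut_pow[OF cs(1) ut] by simp
  also have "\<dots> = sum_list (map (\<lambda>x. x ^ m) ls)"
    unfolding dg[symmetric] diag_mat_def using cs(1)
    by (simp add: sum_list_sum_nth lessThan_atLeast0)
  finally show ?thesis .
qed

end


lemma sum_list_le_len:
  assumes "\<And>x. x \<in> set xs \<Longrightarrow> f x \<le> (c::real)"
  shows "sum_list (map f xs) \<le> real (length xs) * c"
  using assms
proof (induction xs)
  case (Cons a xs)
  then have "f a \<le> c" "sum_list (map f xs) \<le> real (length xs) * c" by auto
  then show ?case by (simp add: algebra_simps)
qed simp

lemma pow_bound:
  fixes a b C :: real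
  assumes a: "a \<ge> 0" and b: "b \<ge> 0" and h: "\<And>j. a ^ (2 ^ j) \<le> C * b ^ (2 ^ j)"
  shows "a \<le> b"
proof (rule ccontr)
  assume "\<not> a \<le> b"
  then have ab: "a > b" by simp
  show False
  proof (cases "b = 0")
    case True
    have "a ^ (2 ^ 0) \<le> C * b ^ (2 ^ 0)" by (rule h)
    moreover have "a ^ (2 ^ 1) \<le> C * b ^ (2 ^ 1)" by (rule h)
    ultimately show False using True ab by (simp add: power2_eq_square)
  next
    case False
    then have bp: "b > 0" using b by simp
    define q where "q = a / b"
    have q1: "q > 1" using ab bp by (simp add: q_def field_simps)
    obtain j :: nat where j: "real j > C / (q - 1)" using reals_Archimedean2 by blast
    have "real j \<le> real (2 ^ j)" by (simp add: less_exp order.strict_implies_order)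
    then have "real (2 ^ j) * (q - 1) > C" using j q1
      by (smt (verit, ccfv_SIG) mult_right_mono pos_divide_less_eq)
    moreover have "1 + real (2 ^ j) * (q - 1) \<le> (1 + (q - 1)) ^ (2 ^ j)"
      by (rule bernoulli_inequality) (use q1 in simp)
    ultimately have "q ^ (2 ^ j) > C" by simp
    moreover have "q ^ (2 ^ j) = a ^ (2 ^ j) / b ^ (2 ^ j)" by (simp add: q_def power_divide)
    ultimately have "a ^ (2 ^ j) > C * b ^ (2 ^ j)" using bp by (simp add: field_simps)
    then show False using h[of j] by simp
  qed
qed

locale specsetup = symmat +
  fixes X :: "nat \<Rightarrow> real" and lam :: real and rest :: "real list" and th :: real
  assumes eigX: "\<And>i. i < n \<Longrightarrow> mvA A n X i = lam * X i"
    and normX: "ip n X X = 1"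
    and cp: "char_poly A = (\<Prod>a\<leftarrow>lam # rest. [:- a, 1:])"
    and len: "length rest + 1 = n"
    and thb: "\<And>\<mu>. \<mu> \<in> set rest \<Longrightarrow> \<bar>\<mu>\<bar> \<le> th"
    and th0: "th \<ge> 0"
begin

lemma mvp_eig: "i < n \<Longrightarrow> mvp A n k X i = lam ^ k * X i"
proof (induction k arbitrary: i)
  case 0 then show ?case by simp
next
  case (Suc k)
  have "mvA A n (mvp A n k X) = mvA A n (\<lambda>j. lam ^ k * X j)"
    by (rule mvA_cong) (use Suc in auto)
  also have "\<dots> = (\<lambda>j. lam ^ k * mvA A n X j)"
    using mvA_lin[of A n "lam ^ k" X 0 X] by simp
  finally show ?case using Suc eigX by (simp add: mvp_Suc)
qed

definition ev :: "nat \<Rightarrow> nat \<Rightarrow> real" where "ev j = (\<lambda>x. if x = j then 1 else 0)"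

lemma mvp_ev: "i < n \<Longrightarrow> j < n \<Longrightarrow> mvp A n k (ev j) i = (A ^\<^sub>m k) $$ (i,j)"
  by (simp add: mvp_entry ev_def if_distrib[of "\<lambda>x. _ * x"] cong: if_cong)

lemma ip_ev: "j < n \<Longrightarrow> ip n (ev j) u = u j"
  by (simp add: ip_def ev_def if_distrib[of "\<lambda>x. x * _"] cong: if_cong)

lemma frob:
  assumes rX: "ip n r X = 0"
  shows "ip n (mvp A n M r) (mvp A n M r) \<le> (real (n - 1) * th ^ (2 * M)) * ip n r r"
proof -
  define P where "P i j = (A ^\<^sub>m M) $$ (i,j)" for i j
  define s where "s i = lam ^ M * X i" for i
  have sP: "(\<Sum>j<n. P i j * X j) = s i" if "i < n" for i
    using mvp_entry[OF that, of M X] mvp_eig[OF that, of M] by (simp add: P_def s_def)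
  have rowi: "(mvp A n M r i)\<^sup>2 \<le> ((\<Sum>j<n. (P i j)\<^sup>2) - (s i)\<^sup>2) * ip n r r" if i: "i < n" for i
  proof -
    define c where "c j = P i j - s i * X j" for j
    have "mvp A n M r i = (\<Sum>j<n. P i j * r j)" using mvp_entry[OF i] by (simp add: P_def)
    also have "\<dots> = ip n c r + s i * ip n X r"
      by (simp add: c_def ip_def sum_distrib_left sum.distrib[symmetric] algebra_simps)
    also have "\<dots> = ip n c r" using rX by (simp add: ip_sym)
    finally have e: "mvp A n M r i = ip n c r" .
    have "ip n c c = (\<Sum>j<n. (P i j)\<^sup>2) - 2 * s i * (\<Sum>j<n. P i j * X j) + (s i)\<^sup>2 * ip n X X"
      by (simp add: c_def ip_def power2_eq_square algebra_simps sum_subtractf sum.distrib sum_distrib_left)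
    also have "\<dots> = (\<Sum>j<n. (P i j)\<^sup>2) - (s i)\<^sup>2" using sP[OF i] normX by (simp add: power2_eq_square)
    finally show ?thesis using e cauchy_schwarz[of n c r] by simp
  qed
  have S1: "(\<Sum>i<n. (s i)\<^sup>2) = lam ^ (2 * M)"
  proof -
    have "(\<Sum>i<n. (s i)\<^sup>2) = (lam ^ M)\<^sup>2 * ip n X X"
      by (simp add: s_def ip_def power2_eq_square sum_distrib_left mult_ac)
    moreover have "(lam ^ M)\<^sup>2 = lam ^ (2 * M)" by (subst mult.commute) (rule power_mult[symmetric])
    ultimately show ?thesis using normX by simp
  qed
  have S2: "(\<Sum>i<n. \<Sum>j<n. (P i j)\<^sup>2) = sum_list (map (\<lambda>x. x ^ (2 * M)) (lam # rest))"
  proof -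
    have "(\<Sum>i<n. \<Sum>j<n. (P i j)\<^sup>2) = (\<Sum>j<n. \<Sum>i<n. (P i j)\<^sup>2)" by (rule sum.swap)
    also have "\<dots> = (\<Sum>j<n. ip n (mvp A n M (ev j)) (mvp A n M (ev j)))"
      by (intro sum.cong refl) (auto simp: ip_def mvp_ev P_def power2_eq_square)
    also have "\<dots> = (\<Sum>j<n. ip n (ev j) (mvp A n M (mvp A n M (ev j))))"
      by (intro sum.cong refl) (simp add: ip_mvp)
    also have "\<dots> = (\<Sum>j<n. (A ^\<^sub>m (2 * M)) $$ (j,j))"
      by (intro sum.cong refl) (simp add: ip_ev mvp_add[symmetric] mvp_ev mult_2)
    also have "\<dots> = sum_list (map (\<lambda>x. x ^ (2 * M)) (lam # rest))"
      by (rule trace_pow[OF cp])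
    finally show ?thesis .
  qed
  have S3: "sum_list (map (\<lambda>x. x ^ (2 * M)) rest) \<le> real (length rest) * th ^ (2 * M)"
  proof (rule sum_list_le_len)
    fix x assume "x \<in> set rest"
    then have "\<bar>x\<bar> \<le> th" by (rule thb)
    then have "\<bar>x\<bar> ^ (2 * M) \<le> th ^ (2 * M)" by (intro power_mono) auto
    then show "x ^ (2 * M) \<le> th ^ (2 * M)" by (simp add: power_even_abs)
  qed
  have "ip n (mvp A n M r) (mvp A n M r) = (\<Sum>i<n. (mvp A n M r i)\<^sup>2)"
    by (simp add: ip_def power2_eq_square)
  also have "\<dots> \<le> (\<Sum>i<n. ((\<Sum>j<n. (P i j)\<^sup>2) - (s i)\<^sup>2) * ip n r r)"
    by (intro sum_mono rowi) simp
  also have "\<dots> = ((\<Sum>i<n. \<Sum>j<n. (P i j)\<^sup>2) - (\<Sum>i<n. (s i)\<^sup>2)) * ip n r r"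
    by (simp only: sum_distrib_right[symmetric] sum_subtractf)
  also have "\<dots> = sum_list (map (\<lambda>x. x ^ (2 * M)) rest) * ip n r r"
    unfolding S1 S2 by simp
  also have "\<dots> \<le> (real (length rest) * th ^ (2 * M)) * ip n r r"
    by (rule mult_right_mono[OF S3 ip_self_nonneg])
  also have "real (length rest) = real (n - 1)" using len by simp
  finally show ?thesis .
qed

end


context specsetup
begin

lemma unit_bound:
  assumes uX: "ip n u X = 0" and uu: "ip n u u = 1"
  shows "ip n (mvp A n m u) (mvp A n m u) \<le> th ^ (2 * m)"
proof -
  define g where "g m = ip n (mvp A n m u) (mvp A n m u)" for m
  have g0: "g m \<ge> 0" for m unfolding g_def by (rule ip_self_nonneg)
  have gsq: "(g m)\<^sup>2 \<le> g (2 * m)" for m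
  proof -
    have "g m = ip n u (mvp A n (m + m) u)"
      unfolding g_def mvp_add ip_mvp ..
    then have "(g m)\<^sup>2 \<le> ip n u u * g (m + m)"
      using cauchy_schwarz[of n u "mvp A n (m + m) u"] by (simp add: g_def)
    then show ?thesis using uu by (simp add: mult_2)
  qed
  have iter: "g m ^ (2 ^ j) \<le> g (2 ^ j * m)" for j
  proof (induction j)
    case 0 then show ?case by simp
  next
    case (Suc j)
    have "g m ^ (2 ^ Suc j) = (g m ^ (2 ^ j))\<^sup>2" by (simp add: power_mult[symmetric] mult.commute)
    also have "\<dots> \<le> (g (2 ^ j * m))\<^sup>2"
      by (rule power_mono[OF Suc]) (simp add: g0)
    also have "\<dots> \<le> g (2 * (2 ^ j * m))" by (rule gsq)
    finally show ?case by (simp add: mult.assoc)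
  qed
  have fb: "g m ^ (2 ^ j) \<le> real (n - 1) * (th ^ (2 * m)) ^ (2 ^ j)" for j
  proof -
    have "g (2 ^ j * m) \<le> (real (n - 1) * th ^ (2 * (2 ^ j * m))) * ip n u u"
      unfolding g_def by (rule frob[OF uX])
    also have "th ^ (2 * (2 ^ j * m)) = (th ^ (2 * m)) ^ (2 ^ j)"
      by (simp add: power_mult[symmetric] mult_ac)
    finally show ?thesis using iter[of j] uu by simp
  qed
  have "g m \<le> th ^ (2 * m)"
    by (rule pow_bound[OF g0 _ fb]) (simp add: th0)
  then show ?thesis by (simp add: g_def)
qed

lemma orth_bound:
  assumes rX: "ip n r X = 0"
  shows "ip n (mvp A n m r) (mvp A n m r) \<le> th ^ (2 * m) * ip n r r"
proof (cases "ip n r r = 0")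
  case True
  have "mvp A n m r i = 0" if "i < n" for i
  proof -
    have "mvp A n m r i = mvp A n m (\<lambda>x. 0 * r x) i"
      by (rule mvp_cong) (use ip_self_zero[OF True] that in auto)
    also have "\<dots> = 0 * mvp A n m r i" by (simp only: mvp_scale)
    finally show ?thesis by simp
  qed
  then have "ip n (mvp A n m r) (mvp A n m r) = 0" by (simp add: ip_def)
  then show ?thesis using True by simp
next
  case False
  define N where "N = ip n r r"
  have Np: "N > 0" using False ip_self_nonneg[of n r] by (simp add: N_def)
  define u where "u x = (1 / sqrt N) * r x" for x
  have ru: "r = (\<lambda>x. sqrt N * u x)" using Np by (auto simp: u_def)
  have uu: "ip n u u = 1"
    using Np by (simp add: u_def ip_def N_def power2_eq_square sum_divide_distrib[symmetric] field_simps)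
  have uX: "ip n u X = 0"
    using rX by (simp add: u_def ip_def sum_divide_distrib[symmetric])
  have "ip n (mvp A n m r) (mvp A n m r) = N * ip n (mvp A n m u) (mvp A n m u)"
  proof -
    have ss: "sqrt N * sqrt N = N" using Np by simp
    have sN: "sqrt N * z * (sqrt N * z) = N * (z * z)" for z
      by (metis ss mult.assoc mult.commute)
    show ?thesis
      unfolding ru mvp_scale ip_def sum_distrib_left by (intro sum.cong refl) (rule sN)
  qed
  also have "\<dots> \<le> N * th ^ (2 * m)"
    using unit_bound[OF uX uu] Np by simp
  finally show ?thesis by (simp add: N_def mult.commute)
qed

end


context specsetup
begin

definition rr :: "nat \<Rightarrow> nat \<Rightarrow> real" where
  "rr j = (\<lambda>x. 1 * ev j x + (- X j) * X x)"

lemma ip_scale: "ip n w (\<lambda>x. a * u x) = a * ip n w u"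
  using ip_lin[of n w a u 0 u] by simp

lemma ev_split: "ev j = (\<lambda>x. 1 * rr j x + X j * X x)"
  by (auto simp: rr_def)

lemma rr_X: "j < n \<Longrightarrow> ip n (rr j) X = 0"
proof -
  assume j: "j < n"
  have "ip n (rr j) X = ip n X (rr j)" by (rule ip_sym)
  also have "\<dots> = 1 * ip n X (ev j) + (- X j) * ip n X X" unfolding rr_def by (rule ip_lin)
  also have "ip n X (ev j) = X j" using ip_ev[OF j, of X] by (simp add: ip_sym)
  finally show ?thesis using normX by simp
qed

lemma rr_rr: "j < n \<Longrightarrow> ip n (rr j) (rr j) = 1 - (X j)\<^sup>2"
proof -
  assume j: "j < n"
  have "ip n (rr j) (rr j) = 1 * ip n (rr j) (ev j) + (- X j) * ip n (rr j) X"
    by (subst (2) rr_def) (rule ip_lin)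
  also have "ip n (rr j) (ev j) = rr j j" using ip_ev[OF j, of "rr j"] by (simp add: ip_sym)
  finally show ?thesis using rr_X[OF j] by (simp add: rr_def ev_def power2_eq_square)
qed

lemma entry_decomp:
  assumes i: "i < n" and j: "j < n"
  shows "mvp A n k (ev j) i = ip n (rr i) (mvp A n k (rr j)) + lam ^ k * X i * X j"
proof -
  define w where "w = mvp A n k (ev j)"
  have w: "w = (\<lambda>x. 1 * mvp A n k (rr j) x + X j * mvp A n k X x)"
    unfolding w_def by (subst ev_split) (rule mvp_lin)
  have eigk: "ip n u (mvp A n k X) = lam ^ k * ip n u X" for u
  proof -
    have "ip n u (mvp A n k X) = ip n u (\<lambda>x. lam ^ k * X x)"
      by (rule ip_cong) (auto simp: mvp_eig)
    then show ?thesis by (simp add: ip_scale)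
  qed
  have "mvp A n k (ev j) i = ip n (ev i) w" using ip_ev[OF i, of w] by (simp add: w_def)
  also have "\<dots> = ip n w (ev i)" by (rule ip_sym)
  also have "\<dots> = 1 * ip n w (rr i) + X i * ip n w X" by (subst ev_split) (rule ip_lin)
  also have "ip n w X = lam ^ k * X j"
  proof -
    have "ip n w X = ip n X (mvp A n k (ev j))" by (simp add: w_def ip_sym)
    also have "\<dots> = ip n (mvp A n k X) (ev j)" by (rule ip_mvp)
    also have "\<dots> = ip n (ev j) (mvp A n k X)" by (rule ip_sym)
    also have "\<dots> = lam ^ k * X j" by (simp add: eigk ip_ev[OF j])
    finally show ?thesis .
  qed
  also have "ip n w (rr i) = ip n (rr i) (mvp A n k (rr j))"
  proof -
    have "ip n w (rr i) = ip n (rr i) w" by (rule ip_sym)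
    also have "\<dots> = 1 * ip n (rr i) (mvp A n k (rr j)) + X j * ip n (rr i) (mvp A n k X)"
      unfolding w by (rule ip_lin)
    also have "ip n (rr i) (mvp A n k X) = 0" by (simp add: eigk rr_X[OF i])
    finally show ?thesis by simp
  qed
  finally show ?thesis by (simp add: mult_ac)
qed

lemma entry_bound:
  assumes i: "i < n" and j: "j < n"
  shows "(mvp A n k (ev j) i - lam ^ k * X i * X j)\<^sup>2 \<le> th ^ (2 * k) * (1 - (X i)\<^sup>2) * (1 - (X j)\<^sup>2)"
proof -
  have "(mvp A n k (ev j) i - lam ^ k * X i * X j)\<^sup>2 = (ip n (rr i) (mvp A n k (rr j)))\<^sup>2"
    by (simp add: entry_decomp[OF i j])
  also have "\<dots> \<le> ip n (rr i) (rr i) * ip n (mvp A n k (rr j)) (mvp A n k (rr j))"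
    by (rule cauchy_schwarz)
  also have "\<dots> \<le> ip n (rr i) (rr i) * (th ^ (2 * k) * ip n (rr j) (rr j))"
    by (rule mult_left_mono[OF orth_bound[OF rr_X[OF j]] ip_self_nonneg])
  finally show ?thesis by (simp add: rr_rr i j mult_ac)
qed

end


definition adj :: "nat set set \<Rightarrow> nat \<Rightarrow> nat \<Rightarrow> bool" where
  "adj E i j \<longleftrightarrow> i \<noteq> j \<and> (\<exists>e\<in>E. i \<in> e \<and> j \<in> e)"

lemma hg_adj_carrier: "hg_adj n E \<in> carrier_mat n n"
  by (simp add: hg_adj_def)

lemma hg_adj_entry: "i < n \<Longrightarrow> j < n \<Longrightarrow> hg_adj n E $$ (i,j) = (if i = j then 0
      else (\<Sum>e\<in>{e\<in>E. i \<in> e \<and> j \<in> e}. 1 / (real (card e) - 1)))"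
  by (simp add: hg_adj_def)

lemma hg_adj_sym: "i < n \<Longrightarrow> j < n \<Longrightarrow> hg_adj n E $$ (i,j) = hg_adj n E $$ (j,i)"
  by (simp add: hg_adj_entry conj_commute)

lemma hg_finite: "hypergraph n E \<Longrightarrow> finite E"
proof -
  assume h: "hypergraph n E"
  have "E \<subseteq> Pow {0..<n}" using h by (auto simp: hypergraph_def)
  then show "finite E" by (rule finite_subset) simp
qed

lemma hg_adj_nonneg:
  assumes "hypergraph n E" "i < n" "j < n"
  shows "hg_adj n E $$ (i,j) \<ge> 0"
proof -
  have "\<forall>e\<in>{e\<in>E. i \<in> e \<and> j \<in> e}. 1 / (real (card e) - 1) \<ge> 0"
    using assms(1) by (auto simp: hypergraph_def)
  then show ?thesis using assms by (auto simp: hg_adj_entry intro: sum_nonneg)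
qed

lemma hg_adj_pos:
  assumes h: "hypergraph n E" and i: "i < n" and j: "j < n"
  shows "hg_adj n E $$ (i,j) > 0 \<longleftrightarrow> adj E i j"
proof
  assume p: "hg_adj n E $$ (i,j) > 0"
  then have "i \<noteq> j" using i j by (auto simp: hg_adj_entry)
  moreover have "{e\<in>E. i \<in> e \<and> j \<in> e} \<noteq> {}"
  proof
    assume em: "{e\<in>E. i \<in> e \<and> j \<in> e} = {}"
    have "hg_adj n E $$ (i,j) = 0" using i j by (simp only: hg_adj_entry em sum.empty if_cancel)
    with p show False by simp
  qed
  ultimately show "adj E i j" by (auto simp: adj_def)
next
  assume a: "adj E i j"
  then obtain e where e: "e \<in> E" "i \<in> e" "j \<in> e" and ij: "i \<noteq> j" by (auto simp: adj_def)
  have fin: "finite {e\<in>E. i \<in> e \<and> j \<in> e}" using hg_finite[OF h] by simp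
  have pos: "\<forall>e\<in>{e\<in>E. i \<in> e \<and> j \<in> e}. 1 / (real (card e) - 1) > 0"
    using h by (auto simp: hypergraph_def)
  have "(\<Sum>e\<in>{e\<in>E. i \<in> e \<and> j \<in> e}. 1 / (real (card e) - 1)) > 0"
    by (rule sum_pos[OF fin]) (use e pos in auto)
  then show "hg_adj n E $$ (i,j) > 0" using i j ij by (simp add: hg_adj_entry)
qed

lemma propagate:
  assumes h: "hypergraph n E" and c: "hg_connected n E"
    and i0: "i0 < n" "P i0"
    and step: "\<And>a b. a < n \<Longrightarrow> b < n \<Longrightarrow> adj E a b \<Longrightarrow> P a \<Longrightarrow> P b"
    and j: "j < n"
  shows "P j"
proof -
  obtain l where "hg_path_between E i0 j l" using c i0 j by (auto simp: hg_connected_def)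
  then obtain vs es where p: "hg_path E vs es" and hd: "hd vs = i0" and lst: "last vs = j"
    by (auto simp: hg_path_between_def)
  have lens: "length vs = length es + 1" using p by (simp add: hg_path_def)
  have "vs ! k < n \<and> P (vs ! k)" if "k < length vs" for k
    using that
  proof (induction k)
    case 0
    then show ?case using hd i0 by (cases vs) auto
  next
    case (Suc k)
    then have k: "k < length es" using lens by simp
    have ek: "es ! k \<in> E" using p k by (auto simp: hg_path_def)
    have mem: "vs ! k \<in> es ! k" "vs ! Suc k \<in> es ! k" using p k by (auto simp: hg_path_def)
    have "vs ! k \<noteq> vs ! Suc k" using p Suc.prems by (auto simp: hg_path_def nth_eq_iff_index_eq)
    then have a: "adj E (vs ! k) (vs ! Suc k)" using ek mem by (auto simp: adj_def)
    have "es ! k \<subseteq> {0..<n}" using h ek by (simp add: hypergraph_def)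
    then have "vs ! Suc k < n" using mem by auto
    with Suc a step show ?case by auto
  qed
  moreover have "vs \<noteq> []" using lens by auto
  ultimately show ?thesis using lst
  proof -
    assume a: "\<And>k. k < length vs \<Longrightarrow> vs ! k < n \<and> P (vs ! k)" and "vs \<noteq> []" and "last vs = j"
    then have "last vs = vs ! (length vs - 1)" "length vs - 1 < length vs" by (auto simp: last_conv_nth)
    then show ?thesis using a \<open>last vs = j\<close> by metis
  qed
qed

lemma path_prepend:
  assumes p: "hg_path E vs es" and hd: "hd vs = c" and lst: "last vs = j"
    and e: "e \<in> E" "i \<in> e" "c \<in> e" and ic: "i \<noteq> c"
  shows "\<exists>l' \<le> length es + 1. hg_path_between E i j l'"
proof -
  have lens: "length vs = length es + 1" and dv: "distinct vs" and de: "distinct es"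
    and sE: "set es \<subseteq> E" and lk: "\<And>k. k < length es \<Longrightarrow> vs ! k \<in> es ! k \<and> vs ! (k+1) \<in> es ! k"
    using p by (auto simp: hg_path_def)
  have vne: "vs \<noteq> []" using lens by auto
  show ?thesis
  proof (cases "i \<in> set vs")
    case True
    then obtain q where q: "q < length vs" "vs ! q = i" by (auto simp: in_set_conv_nth)
    have "hg_path E (drop q vs) (drop q es)"
      unfolding hg_path_def using lens dv de sE lk q
      by (auto simp: distinct_drop dest: in_set_dropD)
    moreover have "hd (drop q vs) = i" using q by (simp add: hd_drop_conv_nth)
    moreover have "last (drop q vs) = j" using q lst by (simp add: last_drop)
    ultimately have "hg_path_between E i j (length (drop q es))"
      unfolding hg_path_between_def by blast
    then show ?thesis by (intro exI[of _ "length (drop q es)"]) auto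
  next
    case iv: False
    show ?thesis
    proof (cases "e \<in> set es")
      case True
      then obtain q where q: "q < length es" "es ! q = e" by (auto simp: in_set_conv_nth)
      define vs' where "vs' = i # drop (q+1) vs"
      define es' where "es' = e # drop (q+1) es"
      have "e \<notin> set (drop (q+1) es)"
      proof
        assume "e \<in> set (drop (q+1) es)"
        then obtain r where r: "r < length (drop (q+1) es)" "drop (q+1) es ! r = e"
          by (auto simp: in_set_conv_nth)
        then have "es ! (q + 1 + r) = es ! q" "q + 1 + r < length es" using q by auto
        then show False using de q(1) by (simp add: nth_eq_iff_index_eq)
      qed
      moreover have "i \<notin> set (drop (q+1) vs)" using iv by (auto dest: in_set_dropD)
      moreover have "vs ! (q+1) \<in> e" using lk q by auto
      ultimately have "hg_path E vs' es'"
        unfolding hg_path_def vs'_def es'_def using lens dv de sE lk q e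
        by (auto simp: distinct_drop nth_Cons' dest: in_set_dropD)
      moreover have "hd vs' = i" by (simp add: vs'_def)
      moreover have "last vs' = j" using q lst lens by (simp add: vs'_def last_drop)
      ultimately have "hg_path_between E i j (length es')"
        unfolding hg_path_between_def by blast
      then show ?thesis using q by (intro exI[of _ "length es'"]) (auto simp: es'_def)
    next
      case False
      have lk2: "\<And>k. 0 < k \<Longrightarrow> k < length es + 1 \<Longrightarrow> vs ! k \<in> es ! (k-1)"
        using lk by (metis Suc_diff_1 Suc_eq_plus1 add_less_cancel_right)
      have "hg_path E (i # vs) (e # es)"
        unfolding hg_path_def using lens dv de sE lk lk2 e iv False hd vne
        by (auto simp: nth_Cons' hd_conv_nth)
      moreover have "last (i # vs) = j" using lst vne by simp
      ultimately have "hg_path_between E i j (length (e # es))"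
        unfolding hg_path_between_def by force
      then show ?thesis by (intro exI[of _ "length (e # es)"]) auto
    qed
  qed
qed



lemma sum_nonneg_zero_each:
  fixes f :: "nat \<Rightarrow> real"
  assumes "(\<Sum>b<n. f b) \<le> 0" "\<And>b. b < n \<Longrightarrow> f b \<ge> 0" "b < n"
  shows "f b = 0"
proof -
  have "(\<Sum>b<n. f b) = 0" using assms(1,2) by (meson antisym sum_nonneg lessThan_iff)
  then show ?thesis using assms(2,3) by (subst (asm) sum_nonneg_eq_0_iff) auto
qed

locale hgeig =
  fixes n :: nat and E :: "nat set set" and X :: "nat \<Rightarrow> real" and lam :: real
  assumes hyp: "hypergraph n E" and conn: "hg_connected n E" and npos: "n > 0"
    and Xpos: "\<And>i. i < n \<Longrightarrow> X i > 0"
    and eig: "\<And>i. i < n \<Longrightarrow> mvA (hg_adj n E) n X i = lam * X i"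
begin

abbreviation "AA \<equiv> hg_adj n E"

lemma sm: "symmat n AA"
  by unfold_locales (auto simp: hg_adj_carrier hg_adj_sym)

lemma Anonneg: "a < n \<Longrightarrow> b < n \<Longrightarrow> AA $$ (a,b) \<ge> 0"
  by (rule hg_adj_nonneg[OF hyp])

lemma mvA_sum: "mvA AA n Y a = (\<Sum>b<n. AA $$ (a,b) * Y b)"
  by (simp add: mvA_def)

lemma zero_spread:
  assumes Zn: "\<And>i. i < n \<Longrightarrow> Z i \<ge> 0"
    and le: "\<And>a. a < n \<Longrightarrow> Z a = 0 \<Longrightarrow> (\<Sum>b<n. AA $$ (a,b) * Z b) \<le> 0"
    and i0: "i0 < n" "Z i0 = 0" and j: "j < n"
  shows "Z j = 0"
proof -
  have st: "Z b = 0" if a: "a < n" and b: "b < n" and ab: "adj E a b" and Za: "Z a = 0" for a b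
  proof -
    have "AA $$ (a,b) * Z b = 0"
      by (rule sum_nonneg_zero_each[OF le[OF a Za] _ b]) (simp add: Anonneg a Zn)
    moreover have "AA $$ (a,b) > 0" using hg_adj_pos[OF hyp a b] ab by simp
    ultimately show "Z b = 0" by simp
  qed
  show ?thesis
    by (rule propagate[where P="\<lambda>i. Z i = 0", OF hyp conn i0(1) i0(2) st j])
qed

lemma max_ratio:
  fixes f :: "nat \<Rightarrow> real"
  obtains i0 where "i0 < n" "\<And>i. i < n \<Longrightarrow> f i / X i \<le> f i0 / X i0"
proof -
  define t where "t = Max ((\<lambda>i. f i / X i) ` {..<n})"
  have "t \<in> (\<lambda>i. f i / X i) ` {..<n}" unfolding t_def using npos by (intro Max_in) auto
  then obtain i0 where i0: "i0 < n" "t = f i0 / X i0" by auto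
  have "f i / X i \<le> t" if "i < n" for i unfolding t_def using that by (intro Max_ge) auto
  then show ?thesis using that i0 by auto
qed

lemma geom_simple:
  assumes eY: "\<And>i. i < n \<Longrightarrow> mvA AA n Y i = lam * Y i"
  shows "\<exists>c. \<forall>i<n. Y i = c * X i"
proof -
  obtain i0 where i0: "i0 < n" and mx: "\<And>i. i < n \<Longrightarrow> Y i / X i \<le> Y i0 / X i0"
    using max_ratio by blast
  define t where "t = Y i0 / X i0"
  define Z where "Z i = t * X i + (-1) * Y i" for i
  have Zn: "Z i \<ge> 0" if "i < n" for i
    using mx[OF that] Xpos[OF that] by (simp add: Z_def t_def pos_divide_le_eq)
  have Z0: "Z i0 = 0" using Xpos[OF i0] by (simp add: Z_def t_def)
  have eZ: "mvA AA n Z a = lam * Z a" if "a < n" for a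
  proof -
    have "mvA AA n Z = (\<lambda>x. t * mvA AA n X x + (-1) * mvA AA n Y x)"
      unfolding Z_def[abs_def] by (rule mvA_lin)
    then show ?thesis using eig[OF that] eY[OF that] by (simp add: Z_def algebra_simps)
  qed
  have "Z j = 0" if "j < n" for j
  proof (rule zero_spread[where Z=Z, OF Zn _ i0 Z0 that])
    fix a assume "a < n" "Z a = 0"
    then show "(\<Sum>b<n. AA $$ (a,b) * Z b) \<le> 0" using eZ by (simp add: mvA_sum)
  qed
  then show ?thesis by (intro exI[of _ t]) (auto simp: Z_def)
qed

lemma eig_abs:
  assumes eY: "\<And>i. i < n \<Longrightarrow> mvA AA n Y i = mu * Y i"
    and i1: "i1 < n" "Y i1 \<noteq> 0"
  shows "\<bar>mu\<bar> \<le> lam \<and> (\<bar>mu\<bar> = lam \<longrightarrow> (\<exists>c>0. \<forall>i<n. \<bar>Y i\<bar> = c * X i))"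
proof -
  obtain i0 where i0: "i0 < n" and mx: "\<And>i. i < n \<Longrightarrow> \<bar>Y i\<bar> / X i \<le> \<bar>Y i0\<bar> / X i0"
    using max_ratio[of "\<lambda>i. \<bar>Y i\<bar>"] by blast
  define c where "c = \<bar>Y i0\<bar> / X i0"
  have cpos: "c > 0"
  proof -
    have "0 < \<bar>Y i1\<bar> / X i1" using i1 Xpos[OF i1(1)] by simp
    also have "\<dots> \<le> c" using mx[OF i1(1)] by (simp add: c_def)
    finally show ?thesis .
  qed
  have Yle: "\<bar>Y i\<bar> \<le> c * X i" if "i < n" for i
    using mx[OF that] Xpos[OF that] by (simp add: c_def pos_divide_le_eq)
  have Yi0: "\<bar>Y i0\<bar> = c * X i0" using Xpos[OF i0] by (simp add: c_def)
  have key1: "\<bar>mu\<bar> * \<bar>Y a\<bar> \<le> (\<Sum>b<n. AA $$ (a,b) * \<bar>Y b\<bar>)" if a: "a < n" for a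
  proof -
    have "\<bar>mu\<bar> * \<bar>Y a\<bar> = \<bar>\<Sum>b<n. AA $$ (a,b) * Y b\<bar>"
      using eY[OF a] by (simp add: mvA_sum abs_mult)
    also have "\<dots> \<le> (\<Sum>b<n. \<bar>AA $$ (a,b) * Y b\<bar>)" by (rule sum_abs)
    also have "\<dots> = (\<Sum>b<n. AA $$ (a,b) * \<bar>Y b\<bar>)"
      by (intro sum.cong refl) (simp add: abs_mult Anonneg a)
    finally show ?thesis .
  qed
  have key2: "(\<Sum>b<n. AA $$ (a,b) * \<bar>Y b\<bar>) \<le> c * lam * X a" if a: "a < n" for a
  proof -
    have "(\<Sum>b<n. AA $$ (a,b) * \<bar>Y b\<bar>) \<le> (\<Sum>b<n. AA $$ (a,b) * (c * X b))"
      by (intro sum_mono mult_left_mono Yle) (auto simp: Anonneg a)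
    also have "\<dots> = c * mvA AA n X a" by (simp add: mvA_sum sum_distrib_left mult_ac)
    finally show ?thesis using eig[OF a] by simp
  qed
  have le: "\<bar>mu\<bar> \<le> lam"
  proof -
    have "\<bar>mu\<bar> * (c * X i0) \<le> lam * (c * X i0)"
      using key1[OF i0] key2[OF i0] Yi0 by (simp add: mult_ac)
    then show ?thesis using cpos Xpos[OF i0] by simp
  qed
  have eq: "\<exists>c>0. \<forall>i<n. \<bar>Y i\<bar> = c * X i" if mueq: "\<bar>mu\<bar> = lam"
  proof -
    define Z where "Z i = c * X i - \<bar>Y i\<bar>" for i
    have Zn: "Z i \<ge> 0" if "i < n" for i using Yle[OF that] by (simp add: Z_def)
    have Z0: "Z i0 = 0" using Yi0 by (simp add: Z_def)
    have "Z j = 0" if "j < n" for j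
    proof (rule zero_spread[where Z=Z, OF Zn _ i0 Z0 that])
      fix a assume a: "a < n" and Za: "Z a = 0"
      have "(\<Sum>b<n. AA $$ (a,b) * Z b) = c * (\<Sum>b<n. AA $$ (a,b) * X b) - (\<Sum>b<n. AA $$ (a,b) * \<bar>Y b\<bar>)"
        by (simp add: Z_def right_diff_distrib sum_subtractf sum_distrib_left mult_ac)
      also have "(\<Sum>b<n. AA $$ (a,b) * X b) = lam * X a" using eig[OF a] by (simp add: mvA_sum)
      finally have eqS: "(\<Sum>b<n. AA $$ (a,b) * Z b) = c * (lam * X a) - (\<Sum>b<n. AA $$ (a,b) * \<bar>Y b\<bar>)" .
      have "c * X a = \<bar>Y a\<bar>" using Za by (simp add: Z_def)
      then have "c * (lam * X a) = \<bar>mu\<bar> * \<bar>Y a\<bar>" using mueq by (metis mult.left_commute)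
      then show "(\<Sum>b<n. AA $$ (a,b) * Z b) \<le> 0"
        using key1[OF a] eqS by linarith
    qed
    then show ?thesis using cpos by (intro exI[of _ c]) (auto simp: Z_def)
  qed
  show ?thesis using le eq by blast
qed

lemma no_neg:
  assumes eY: "\<And>i. i < n \<Longrightarrow> mvA AA n Y i = - lam * Y i"
    and i1: "i1 < n" "Y i1 \<noteq> 0"
    and tri: "a < n" "b < n" "d < n" "adj E a b" "adj E b d" "adj E a d"
    and lpos: "lam \<ge> 0"
  shows False
proof -
  have "\<bar>- lam\<bar> = lam" using lpos by simp
  then obtain c where c: "c > 0" "\<And>i. i < n \<Longrightarrow> \<bar>Y i\<bar> = c * X i"
    using eig_abs[OF eY i1] by blast
  have Ynz: "Y i \<noteq> 0" if "i < n" for i using c(2)[OF that] c(1) Xpos[OF that] by auto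
  have sabs: "(\<Sum>b<n. AA $$ (a,b) * \<bar>Y b\<bar>) = lam * \<bar>Y a\<bar>" if a: "a < n" for a
  proof -
    have "(\<Sum>b<n. AA $$ (a,b) * \<bar>Y b\<bar>) = c * mvA AA n X a"
      using c(2) by (simp add: mvA_sum sum_distrib_left mult_ac)
    then show ?thesis using eig[OF a] c(2)[OF a] by (simp add: mult_ac)
  qed
  have pn: "Y y < 0" if "x < n" "y < n" "adj E x y" "Y x > 0" for x y
  proof -
    have "(\<Sum>b<n. AA $$ (x,b) * (\<bar>Y b\<bar> + Y b)) = lam * \<bar>Y x\<bar> + mvA AA n Y x"
      using sabs[OF that(1)] by (simp add: mvA_sum distrib_left sum.distrib)
    also have "\<dots> = 0" using eY[OF that(1)] that(4) by simp
    finally have "AA $$ (x,y) * (\<bar>Y y\<bar> + Y y) = 0"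
      by (intro sum_nonneg_zero_each[where n=n and f="\<lambda>b. AA $$ (x,b) * (\<bar>Y b\<bar> + Y b)"]) (auto simp: Anonneg that)
    moreover have "AA $$ (x,y) > 0" using hg_adj_pos[OF hyp that(1,2)] that(3) by simp
    ultimately have "\<bar>Y y\<bar> + Y y = 0" by simp
    then show ?thesis using Ynz[OF that(2)] by linarith
  qed
  have np: "Y y > 0" if "x < n" "y < n" "adj E x y" "Y x < 0" for x y
  proof -
    have "(\<Sum>b<n. AA $$ (x,b) * (\<bar>Y b\<bar> - Y b)) = lam * \<bar>Y x\<bar> - mvA AA n Y x"
      using sabs[OF that(1)] by (simp add: mvA_sum right_diff_distrib sum_subtractf)
    also have "\<dots> = 0" using eY[OF that(1)] that(4) by simp
    finally have "AA $$ (x,y) * (\<bar>Y y\<bar> - Y y) = 0"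
      by (intro sum_nonneg_zero_each[where n=n and f="\<lambda>b. AA $$ (x,b) * (\<bar>Y b\<bar> - Y b)"]) (auto simp: Anonneg that)
    moreover have "AA $$ (x,y) > 0" using hg_adj_pos[OF hyp that(1,2)] that(3) by simp
    ultimately have "\<bar>Y y\<bar> - Y y = 0" by simp
    then show ?thesis using Ynz[OF that(2)] by linarith
  qed
  show False
  proof (cases "Y a > 0")
    case True
    then have "Y b < 0" "Y d < 0" using pn tri by auto
    then have "Y d > 0" using np tri by auto
    then show False using \<open>Y d < 0\<close> by simp
  next
    case False
    then have "Y a < 0" using Ynz[OF tri(1)] by linarith
    then have "Y b > 0" "Y d > 0" using np tri by auto
    then have "Y d < 0" using pn tri by auto
    then show False using \<open>Y d > 0\<close> by simp
  qed
qed

end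


lemma prod_list_remove1:
  fixes f :: "'a \<Rightarrow> 'b::comm_monoid_mult"
  shows "x \<in> set xs \<Longrightarrow> prod_list (map f xs) = f x * prod_list (map f (remove1 x xs))"
  by (induction xs) (auto simp: mult_ac)

lemma sum_two:
  fixes f :: "nat \<Rightarrow> real"
  assumes "a0 < n" "a1 < n" "a0 \<noteq> a1" "\<And>a. a < n \<Longrightarrow> a \<noteq> a0 \<Longrightarrow> a \<noteq> a1 \<Longrightarrow> f a = 0"
  shows "(\<Sum>a<n. f a) = f a0 + f a1"
proof -
  have "(\<Sum>a<n. f a) = (\<Sum>a\<in>{a0,a1}. f a)"
    by (rule sum.mono_neutral_right) (use assms in auto)
  then show ?thesis using assms(3) by simp
qed

context hgeig
begin

lemma alg_simple:
  assumes cp: "char_poly AA = (\<Prod>a\<leftarrow>lam # rest. [:- a, 1:])" and n2: "n \<ge> 2"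
  shows "lam \<notin> set rest"
proof
  assume lr: "lam \<in> set rest"
  interpret S: symmat n AA by (rule sm)
  define es where "es = lam # lam # remove1 lam rest"
  have cp2: "char_poly AA = (\<Prod>a\<leftarrow>es. [:- a, 1:])"
    unfolding cp es_def using prod_list_remove1[OF lr, of "\<lambda>a. [:- a, 1:]"] by simp
  obtain B P Q where sd: "schur_decomposition AA es = (B,P,Q)" by (cases "schur_decomposition AA es") auto
  from schur_decomposition[OF hg_adj_carrier cp2 sd]
  have wit: "similar_mat_wit AA B P Q" and ut: "upper_triangular B" and dg: "diag_mat B = es" by auto
  from wit have cs: "B \<in> carrier_mat n n" "P \<in> carrier_mat n n" "Q \<in> carrier_mat n n"
     "Q * P = 1\<^sub>m n" "AA = P * B * Q"
    unfolding similar_mat_wit_def Let_def by (auto simp: hg_adj_def)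
  have B00: "B $$ (0,0) = lam" and B11: "B $$ (1,1) = lam"
  proof -
    have "diag_mat B ! 0 = lam" "diag_mat B ! 1 = lam" unfolding dg es_def by auto
    then show "B $$ (0,0) = lam" "B $$ (1,1) = lam" using cs(1) n2 unfolding diag_mat_def by auto
  qed
  have BL: "B $$ (a,c) = 0" if "c < a" "a < n" for a c
    using upper_triangularD[OF ut that(1)] that cs(1) by auto
  have AP: "AA * P = P * B"
  proof -
    have "AA * P = P * B * Q * P" by (subst cs(5)) (rule refl)
    also have "\<dots> = (P * B) * (Q * P)"
      by (rule assoc_mult_mat[of "P * B" n n Q n P n]) (use cs in auto)
    also have "\<dots> = P * B" unfolding cs(4) by (rule right_mult_one_mat) (use cs in auto)
    finally show ?thesis .
  qed
  define p0 where "p0 j = P $$ (j,0)" for j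
  define p1 where "p1 j = P $$ (j,1)" for j
  have colAP: "mvA AA n (\<lambda>j. P $$ (j,c)) i = (\<Sum>a<n. P $$ (i,a) * B $$ (a,c))" if "i < n" "c < n" for i c
  proof -
    have "mvA AA n (\<lambda>j. P $$ (j,c)) i = (AA * P) $$ (i,c)"
      using mult_entry[OF hg_adj_carrier cs(2) that] by (simp add: mvA_def)
    also have "\<dots> = (P * B) $$ (i,c)" by (simp add: AP)
    also have "\<dots> = (\<Sum>a<n. P $$ (i,a) * B $$ (a,c))" using mult_entry[OF cs(2) cs(1) that] .
    finally show ?thesis .
  qed
  have e0: "mvA AA n p0 i = lam * p0 i" if i: "i < n" for i
  proof -
    have "(\<Sum>a<n. P $$ (i,a) * B $$ (a,0)) = P $$ (i,0) * B $$ (0,0) + P $$ (i,1) * B $$ (1,0)"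
      by (rule sum_two) (use n2 BL in auto)
    then show ?thesis using colAP[OF i, of 0] n2 B00 BL[of 0 1] by (simp add: p0_def[abs_def] mult.commute)
  qed
  have e1: "mvA AA n p1 i = B $$ (0,1) * p0 i + lam * p1 i" if i: "i < n" for i
  proof -
    have "(\<Sum>a<n. P $$ (i,a) * B $$ (a,1)) = P $$ (i,0) * B $$ (0,1) + P $$ (i,1) * B $$ (1,1)"
      by (rule sum_two) (use n2 BL in auto)
    then show ?thesis using colAP[OF i, of 1] n2 B11 by (simp add: p0_def p1_def[abs_def] mult.commute)
  qed
  define w where "w i = 1 * mvA AA n p1 i + (- lam) * p1 i" for i
  have wi: "w i = B $$ (0,1) * p0 i" if "i < n" for i using e1[OF that] by (simp add: w_def)
  have "ip n p0 w = 1 * ip n p0 (mvA AA n p1) + (- lam) * ip n p0 p1"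
    unfolding w_def[abs_def] by (rule ip_lin)
  also have "ip n p0 (mvA AA n p1) = ip n (mvA AA n p0) p1" by (rule S.ip_mvA)
  also have "\<dots> = ip n (\<lambda>i. lam * p0 i) p1" by (rule ip_cong) (auto simp: e0)
  also have "\<dots> = lam * ip n p0 p1" by (simp add: ip_def sum_distrib_left mult_ac)
  finally have p0w: "ip n p0 w = 0" by simp
  have "ip n w w = ip n w (\<lambda>i. B $$ (0,1) * p0 i)" by (rule ip_cong) (auto simp: wi)
  also have "\<dots> = B $$ (0,1) * ip n w p0" by (simp add: ip_def sum_distrib_left mult_ac)
  also have "ip n w p0 = 0" using p0w by (simp add: ip_sym)
  finally have "ip n w w = 0" by simp
  then have "w i = 0" if "i < n" for i using ip_self_zero that by blast
  then have e1': "mvA AA n p1 i = lam * p1 i" if "i < n" for i using that by (simp add: w_def)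
  obtain c0 where c0: "\<And>i. i < n \<Longrightarrow> p0 i = c0 * X i" using geom_simple[OF e0] by blast
  obtain c1 where c1: "\<And>i. i < n \<Longrightarrow> p1 i = c1 * X i" using geom_simple[OF e1'] by blast
  define s where "s a = (\<Sum>i<n. Q $$ (a,i) * X i)" for a
  have QPe: "(Q * P) $$ (a,b) = (\<Sum>i<n. Q $$ (a,i) * P $$ (i,b))" if "a < n" "b < n" for a b
    using mult_entry[OF cs(3) cs(2) that] .
  have q00: "c0 * s 0 = 1"
  proof -
    have "(Q * P) $$ (0,0) = 1" using cs(4) n2 by simp
    moreover have "(Q * P) $$ (0,0) = c0 * s 0"
      using QPe[of 0 0] n2 c0 by (simp add: s_def p0_def sum_distrib_left mult_ac)
    ultimately show ?thesis by simp
  qed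
  have q01: "c1 * s 0 = 0"
  proof -
    have "(Q * P) $$ (0,1) = 0" using cs(4) n2 by simp
    moreover have "(Q * P) $$ (0,1) = c1 * s 0"
      using QPe[of 0 1] n2 c1 by (simp add: s_def p1_def sum_distrib_left mult_ac)
    ultimately show ?thesis by simp
  qed
  have q11: "c1 * s 1 = 1"
  proof -
    have "(Q * P) $$ (1,1) = 1" using cs(4) n2 by simp
    moreover have "(Q * P) $$ (1,1) = c1 * s 1"
      using QPe[of 1 1] n2 c1 by (simp add: s_def p1_def sum_distrib_left mult_ac)
    ultimately show ?thesis by simp
  qed
  show False using q00 q01 q11 by (metis mult_eq_0_iff zero_neq_one)
qed

end


lemma floor_part:
  fixes lam th a2 :: real
  assumes lp: "0 < lam" and t0: "0 \<le> th" and tl: "th < lam" and a0: "0 < a2" and a1: "a2 \<le> 1/2"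
  defines "t \<equiv> ln ((1 - a2) / a2) / ln (lam / th)"
  shows "1 \<le> nat \<lfloor>1 + t\<rfloor> \<and> th ^ nat \<lfloor>1 + t\<rfloor> * (1 - a2) < lam ^ nat \<lfloor>1 + t\<rfloor> * a2
         \<and> int (nat \<lfloor>1 + t\<rfloor>) = \<lfloor>1 + t\<rfloor>"
proof (cases "th = 0")
  case True
  then have "t = 0" by (simp add: t_def)
  then show ?thesis using True lp a0 by simp
next
  case False
  then have tp: "th > 0" using t0 by simp
  have R1: "(1 - a2) / a2 \<ge> 1" using a0 a1 by (simp add: field_simps)
  have L: "ln (lam / th) > 0" using tp tl by simp
  have t0': "t \<ge> 0" unfolding t_def using R1 L by (intro divide_nonneg_pos) auto
  define K where "K = nat \<lfloor>1 + t\<rfloor>"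
  have Kint: "int K = \<lfloor>1 + t\<rfloor>" using t0' by (simp add: K_def)
  have "(1::int) \<le> \<lfloor>1 + t\<rfloor>" using t0' by (subst one_le_floor) simp
  then have K1: "1 \<le> K" unfolding K_def by linarith
  have Kt: "real K > t" using Kint by linarith
  have "real K * ln (lam / th) > ln ((1 - a2) / a2)"
    using Kt L by (simp add: t_def pos_divide_less_eq)
  then have "ln ((lam / th) ^ K) > ln ((1 - a2) / a2)"
    using tp lp by (simp add: ln_realpow)
  then have "(lam / th) ^ K > (1 - a2) / a2"
    using R1 tp lp by (subst (asm) ln_less_cancel_iff) auto
  then have "lam ^ K / th ^ K > (1 - a2) / a2" by (simp add: power_divide)
  then have "th ^ K * (1 - a2) < lam ^ K * a2"
    using tp a0 by (simp add: field_simps)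
  then show ?thesis using K1 Kint by (simp add: K_def)
qed

context hgeig
begin

lemma walk_path:
  assumes "mvp AA n k (\<lambda>x. if x = j then 1 else 0) i > 0" "i < n" "j < n"
  shows "\<exists>l \<le> k. hg_path_between E i j l"
  using assms
proof (induction k arbitrary: i)
  case 0
  then have "i = j" by (auto split: if_splits)
  have "hg_path E [i] []" by (simp add: hg_path_def)
  then have "hg_path_between E i j 0" using \<open>i = j\<close> unfolding hg_path_between_def by force
  then show ?case by auto
next
  case (Suc k)
  define w where "w = mvp AA n k (\<lambda>x. if x = j then 1 else 0)"
  have "0 < (\<Sum>c<n. AA $$ (i,c) * w c)" using Suc.prems(1) by (simp add: mvp_Suc mvA_sum w_def)
  then obtain c where c: "c < n" "AA $$ (i,c) * w c > 0"
    by (metis (no_types, lifting) lessThan_iff not_le sum_nonpos)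
  have "AA $$ (i,c) \<ge> 0" using Anonneg Suc.prems(2) c(1) by simp
  then have Ap: "AA $$ (i,c) > 0" and wp: "w c > 0" using c(2) by (auto simp: zero_less_mult_iff)
  obtain l where l: "l \<le> k" "hg_path_between E c j l" using Suc.IH[of c] wp c(1) Suc.prems(3) by (auto simp: w_def)
  then obtain vs es where p: "hg_path E vs es" "hd vs = c" "last vs = j" "length es = l"
    unfolding hg_path_between_def by blast
  have "adj E i c" using hg_adj_pos[OF hyp Suc.prems(2) c(1)] Ap by simp
  then obtain e where e: "e \<in> E" "i \<in> e" "c \<in> e" and ic: "i \<noteq> c" by (auto simp: adj_def)
  from path_prepend[OF p(1-3) e ic] obtain l' where "l' \<le> length es + 1" "hg_path_between E i j l'" by blast
  then show ?case using p(4) l(1) by (intro exI[of _ l']) auto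
qed

end

theorem theorem2:
  fixes n :: nat and E :: "nat set set" and ls :: "real list" and X :: "real vec"
  assumes "hypergraph n E"
    and "hg_connected n E"
    and "E \<noteq> {}" and "Min (card ` E) = 3"
    and "sorted_wrt (\<ge>) ls"
    and "char_poly (hg_adj n E) = (\<Prod>a\<leftarrow>ls. [:- a, 1:])"
    and "eigenvector (hg_adj n E) X (hd ls)"
    and "(\<Sum>i<n. (X $ i)\<^sup>2) = 1"
    and "\<forall>i<n. X $ i > 0"
  shows "let lmax = hd ls;
             \<alpha> = Min {X $ i | i. i < n};
             \<theta> = Max (abs ` set (tl ls))
         in int (hg_diam n E) \<le> \<lfloor>1 + ln ((1 - \<alpha>\<^sup>2) / \<alpha>\<^sup>2) / ln (lmax / \<theta>)\<rfloor>"
proof -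
  note h = assms(1) and cn = assms(2) and cpl = assms(6) and ev = assms(7)
  define AA where "AA = hg_adj n E"
  define lam where "lam = hd ls"
  define rest where "rest = tl ls"
  define Xf where "Xf i = X $ i" for i
  have fE: "finite E" by (rule hg_finite[OF h])
  have "Min (card ` E) \<in> card ` E" using fE assms(3) by (intro Min_in) auto
  then have "3 \<in> card ` E" using assms(4) by simp
  then obtain e3 where e3: "e3 \<in> E" "card e3 = 3" by auto
  then obtain a b d where abd: "e3 = {a,b,d}" "a \<noteq> b" "b \<noteq> d" "a \<noteq> d" by (auto simp: card_3_iff)
  have e3n: "e3 \<subseteq> {0..<n}" using h e3 by (auto simp: hypergraph_def)
  have n3: "n \<ge> 3" using card_mono[OF _ e3n] e3 by simp
  have abdn: "a < n" "b < n" "d < n" using e3n abd by auto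
  have adjs: "adj E a b" "adj E b d" "adj E a d" using abd e3 by (auto simp: adj_def)
  have carr: "AA \<in> carrier_mat n n" by (simp add: AA_def hg_adj_carrier)
  have "degree (char_poly AA) = n" using degree_monic_char_poly[OF carr] by simp
  then have lenls: "length ls = n" using cpl by (simp add: AA_def degree_linear_factors)
  then have lsc: "ls = lam # rest" using n3 by (cases ls) (auto simp: lam_def rest_def)
  have len: "length rest + 1 = n" using lenls lsc by (metis length_Cons Suc_eq_plus1)
  have cp: "char_poly AA = (\<Prod>a\<leftarrow>lam # rest. [:- a, 1:])" using cpl lsc by (simp add: AA_def)
  have Xc: "X \<in> carrier_vec n" and AX: "AA *\<^sub>v X = lam \<cdot>\<^sub>v X"
    using ev carr by (auto simp: eigenvector_def AA_def lam_def)
  have mvA_vec: "mvA AA n (\<lambda>i. v $ i) i = (AA *\<^sub>v v) $ i" if "v \<in> carrier_vec n" "i < n" for v i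
    using that carr by (auto simp: mvA_def scalar_prod_def lessThan_atLeast0 intro!: sum.cong)
  have eigX: "mvA AA n Xf i = lam * Xf i" if "i < n" for i
    using mvA_vec[OF Xc that] AX that Xc by (simp add: Xf_def[abs_def])
  have normX: "ip n Xf Xf = 1" using assms(8) by (simp add: ip_def Xf_def power2_eq_square)
  have Xpos: "Xf i > 0" if "i < n" for i using assms(9) that by (simp add: Xf_def)
  interpret HG: hgeig n E Xf lam
    by unfold_locales (use h cn n3 Xpos eigX in \<open>auto simp: AA_def\<close>)
  have lnr: "lam \<notin> set rest" using HG.alg_simple cp n3 by (simp add: AA_def)
  have mu_lt: "\<bar>mu\<bar> < lam" if mu: "mu \<in> set rest" for mu
  proof -
    have "poly (char_poly AA) mu = 0" unfolding cp using mu by (intro linear_poly_root) simp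
    then have "eigenvalue AA mu" using eigenvalue_root_char_poly[OF carr] by simp
    then obtain v where v: "eigenvector AA v mu" by (auto simp: eigenvalue_def)
    then have vc: "v \<in> carrier_vec n" and vnz: "v \<noteq> 0\<^sub>v n" and Av: "AA *\<^sub>v v = mu \<cdot>\<^sub>v v"
      using carr by (auto simp: eigenvector_def)
    define Y where "Y i = v $ i" for i
    have eY: "mvA AA n Y i = mu * Y i" if "i < n" for i
      using mvA_vec[OF vc that] Av that vc by (simp add: Y_def[abs_def])
    obtain i1 where i1: "i1 < n" "Y i1 \<noteq> 0"
      using vnz vc by (auto simp: Y_def vec_eq_iff)
    have r: "\<bar>mu\<bar> \<le> lam \<and> (\<bar>mu\<bar> = lam \<longrightarrow> (\<exists>c>0. \<forall>i<n. \<bar>Y i\<bar> = c * Xf i))"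
      using HG.eig_abs[of Y mu i1] eY i1 by (simp add: AA_def)
    show ?thesis
    proof (rule ccontr)
      assume "\<not> \<bar>mu\<bar> < lam"
      then have eq: "\<bar>mu\<bar> = lam" using r by simp
      show False
      proof (cases "mu = lam")
        case True then show False using mu lnr by simp
      next
        case False
        then have mul: "mu = - lam" using eq by linarith
        have eY': "mvA HG.AA n Y i = - lam * Y i" if "i < n" for i
          using eY[OF that] mul by (simp add: AA_def)
        have "lam \<ge> 0" using eq by linarith
        then show False using HG.no_neg[OF eY' i1 abdn adjs] by simp
      qed
    qed
  qed
  have rne: "rest \<noteq> []" using len n3 by auto
  define th where "th = Max (abs ` set rest)"
  have thin: "th \<in> abs ` set rest" unfolding th_def using rne by (intro Max_in) auto
  have thb: "\<bar>mu\<bar> \<le> th" if "mu \<in> set rest" for mu unfolding th_def using that by (intro Max_ge) auto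
  have th0: "th \<ge> 0" using thin by auto
  have thl: "th < lam" using thin mu_lt by auto
  have lp: "lam > 0" using th0 thl by simp
  interpret SP: specsetup n AA Xf lam rest th
    by unfold_locales (use carr eigX normX cp len thb th0 in \<open>auto simp: AA_def hg_adj_sym\<close>)
  define al where "al = Min {X $ i | i. i < n}"
  have alset: "{X $ i | i. i < n} = Xf ` {..<n}" by (auto simp: Xf_def)
  have al_in: "al \<in> Xf ` {..<n}" unfolding al_def alset using n3 by (intro Min_in) (auto simp: lessThan_empty_iff)
  have al_le: "al \<le> Xf i" if "i < n" for i unfolding al_def alset using that by (intro Min_le) auto
  have alp: "al > 0" using al_in Xpos by auto
  have a2: "al\<^sup>2 \<le> 1/2"
  proof -
    have "(\<Sum>i<n. al\<^sup>2) \<le> (\<Sum>i<n. (Xf i)\<^sup>2)"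
      by (intro sum_mono power_mono) (use al_le alp in auto)
    then have "real n * al\<^sup>2 \<le> 1" using normX by (simp add: ip_def power2_eq_square)
    moreover have "real n \<ge> 2" using n3 by simp
    then have "2 * al\<^sup>2 \<le> real n * al\<^sup>2" by (intro mult_right_mono) auto
    ultimately show ?thesis by linarith
  qed
  have a2p: "al\<^sup>2 > 0" using alp by simp
  define t where "t = ln ((1 - al\<^sup>2) / al\<^sup>2) / ln (lam / th)"
  define K where "K = nat \<lfloor>1 + t\<rfloor>"
  have FP: "1 \<le> K" "th ^ K * (1 - al\<^sup>2) < lam ^ K * al\<^sup>2" "int K = \<lfloor>1 + t\<rfloor>"
    using floor_part[OF lp th0 thl a2p a2] unfolding K_def t_def by auto
  have pos: "mvp AA n K (SP.ev j) i > 0" if i: "i < n" and j: "j < n" for i j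
  proof -
    define m where "m = lam ^ K * Xf i * Xf j"
    define z where "z = mvp AA n K (SP.ev j) i"
    have Xi1: "(Xf i)\<^sup>2 \<le> 1" and Xj1: "(Xf j)\<^sup>2 \<le> 1"
    proof -
      have "(Xf i)\<^sup>2 \<le> (\<Sum>k<n. (Xf k)\<^sup>2)" using i by (intro member_le_sum) auto
      moreover have "(Xf j)\<^sup>2 \<le> (\<Sum>k<n. (Xf k)\<^sup>2)" using j by (intro member_le_sum) auto
      moreover have "(\<Sum>k<n. (Xf k)\<^sup>2) = 1" using normX by (simp add: ip_def power2_eq_square)
      ultimately show "(Xf i)\<^sup>2 \<le> 1" "(Xf j)\<^sup>2 \<le> 1" by auto
    qed
    have ai: "al\<^sup>2 \<le> (Xf i)\<^sup>2" "al\<^sup>2 \<le> (Xf j)\<^sup>2"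
      using al_le[OF i] al_le[OF j] alp by (auto intro: power_mono)
    have "(z - m)\<^sup>2 \<le> th ^ (2 * K) * (1 - (Xf i)\<^sup>2) * (1 - (Xf j)\<^sup>2)"
      unfolding z_def m_def by (rule SP.entry_bound[OF i j])
    also have "\<dots> \<le> th ^ (2 * K) * (1 - al\<^sup>2) * (1 - al\<^sup>2)"
      using ai Xi1 Xj1 th0 by (intro mult_mono) auto
    also have "\<dots> = (th ^ K * (1 - al\<^sup>2))\<^sup>2" by (simp add: power2_eq_square power_mult mult_ac)
    finally have sq: "(z - m)\<^sup>2 \<le> (th ^ K * (1 - al\<^sup>2))\<^sup>2" .
    have nn: "0 \<le> th ^ K * (1 - al\<^sup>2)" using th0 a2 by simp
    have "\<bar>z - m\<bar> \<le> th ^ K * (1 - al\<^sup>2)"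
      using power2_le_imp_le[of "\<bar>z - m\<bar>" "th ^ K * (1 - al\<^sup>2)"] sq nn by simp
    then have zm: "z \<ge> m - th ^ K * (1 - al\<^sup>2)" by linarith
    have "al * al \<le> Xf i * Xf j" using al_le[OF i] al_le[OF j] alp by (intro mult_mono) auto
    then have "lam ^ K * al\<^sup>2 \<le> m" unfolding m_def using lp
      by (simp add: power2_eq_square mult.assoc)
    then show ?thesis using zm FP(2) by (simp add: z_def)
  qed
  have dist: "hg_dist E i j \<le> K" if i: "i < n" and j: "j < n" for i j
  proof -
    have "mvp AA n K (\<lambda>x. if x = j then 1 else 0) i > 0" using pos[OF i j] by (simp add: SP.ev_def)
    then obtain l where "l \<le> K" "hg_path_between E i j l"
      using HG.walk_path[of K j i] i j by (auto simp: AA_def)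
    then show ?thesis unfolding hg_dist_def by (meson Least_le order_trans)
  qed
  have "hg_diam n E \<le> K"
    unfolding hg_diam_def
  proof (rule Max.boundedI)
    show "finite {hg_dist E i j | i j. i < n \<and> j < n}"
    proof -
      have "{hg_dist E i j | i j. i < n \<and> j < n} = (\<lambda>(i,j). hg_dist E i j) ` ({..<n} \<times> {..<n})" by auto
      then show ?thesis by simp
    qed
    have "hg_dist E 0 0 \<in> {hg_dist E i j | i j. i < n \<and> j < n}" using n3 by (auto intro!: exI[of _ 0])
    then show "{hg_dist E i j | i j. i < n \<and> j < n} \<noteq> {}" by blast
  qed (use dist in auto)
  then have "int (hg_diam n E) \<le> \<lfloor>1 + t\<rfloor>" using FP(3) by linarith
  then show ?thesis unfolding Let_def t_def lam_def th_def al_def rest_def by simp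
qed

end
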